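(* Let $a<0$, $b<0$, $c>0$, $d<0$ with $a+bd>0$, consider $$Z_0=\begin{cases}X=(a,0,b(y+x^2)) & z\ge0,\\ Y=(c,d,x)& z\le0,\end{cases}$$ and let $\Sigma^{c+}=\{(x,y,0)\,:\,b(y+x^2)>0,\ x>0\}=\{(x,y,0)\,:\,x>0,\ y<-x^2\}$. Let $\varphi$ be the first return map $$\varphi(x,y)=\left(\frac{ax-\sqrt{-3a^2(x^2+4y)}}{2a},\ y+\frac{d\big(ax-\sqrt{-3a^2(x^2+4y)}\big)}{ac}\right).$$ Then $$\varphi(\Sigma^{c+})\subset\Big\{(x,y,0)\in\Sigma\,:\,-\tfrac{x^2}{3}+2\tfrac{d}{c}x<y<-\tfrac{x^2}{4}+2\tfrac{d}{c}x,\ x>0\Big\}.$$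
   Context: $\Sigma=\{z=0\}$, points identified with $(x,y)$ or $(x,y,0)$. The first return map $\varphi$ sends a point $p$ of $\Sigma$ to the point obtained by following the trajectory of $X$ from $p$ until it returns to $\Sigma$, and then following the trajectory of $Y$ from there until it returns to $\Sigma$; the displayed formula is its explicit expression. *)

theory Defs
  imports Complex_Main
begin

text \<open>Points of the section Sigma = {z = 0} are identified with pairs (x,y).\<close>

definition Sigma_cplus :: "real \<Rightarrow> (real \<times> real) set" where
  "Sigma_cplus b = {(x, y). b * (y + x^2) > 0 \<and> x > 0}"

definition first_return :: "real \<Rightarrow> real \<Rightarrow> real \<Rightarrow> real \<times> real \<Rightarrow> real \<times> real" where
  "first_return a c d p = (case p of (x, y) \<Rightarrow>
     ((a * x - sqrt (- 3 * a^2 * (x^2 + 4 * y))) / (2 * a),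
      y + d * (a * x - sqrt (- 3 * a^2 * (x^2 + 4 * y))) / (a * c)))"

end

theory Submission
  imports Defs
begin

theorem mainTheorem5:
  fixes a b c d :: real
  assumes "a < 0" and "b < 0" and "c > 0" and "d < 0" and "a + b * d > 0"
  shows "first_return a c d ` Sigma_cplus b \<subseteq>
    {(x, y). - (x^2) / 3 + 2 * (d / c) * x < y \<and> y < - (x^2) / 4 + 2 * (d / c) * x \<and> x > 0}"
proof
  fix p assume "p \<in> first_return a c d ` Sigma_cplus b"
  then obtain x y where xy: "(x,y) \<in> Sigma_cplus b" and p: "p = first_return a c d (x,y)" by auto
  from xy assms have x0: "x > 0" and yl: "y + x^2 < 0"
    by (auto simp: Sigma_cplus_def zero_less_mult_iff)
  define S where "S = sqrt (-3 * (x^2 + 4*y))"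
  have pos: "-3 * (x^2 + 4*y) \<ge> 0" using yl x0 by (simp add: power2_eq_square) (smt (verit) mult_pos_pos)
  have S2: "S^2 = -3 * (x^2 + 4*y)" unfolding S_def using pos by (rule real_sqrt_pow2)
  have S0: "S \<ge> 0" unfolding S_def by (rule real_sqrt_ge_zero[OF pos])
  have S3: "S > 3*x"
  proof -
    have "S^2 > (3*x)^2" using S2 yl x0 by (simp add: power2_eq_square)
    thus ?thesis using S0 x0 by (smt (verit) power_mono)
  qed
  have sq: "sqrt (- 3 * a^2 * (x^2 + 4 * y)) = -a * S"
  proof -
    have "sqrt (- 3 * a^2 * (x^2 + 4 * y)) = sqrt (a^2) * S"
      unfolding S_def real_sqrt_mult[symmetric] by (simp add: algebra_simps)
    thus ?thesis using assms(1) by simp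
  qed
  define X where "X = (x + S)/2"
  have pX: "p = (X, y + 2*(d/c)*X)"
  proof -
    have "p = ((a * x - (-a*S)) / (2 * a), y + d * (a * x - (-a*S)) / (a * c))"
      using p unfolding first_return_def by (simp only: prod.case sq)
    thus ?thesis using assms(1,3) unfolding X_def by (auto simp: field_simps)
  qed
  have y_eq: "y = -(S^2 + 3*x^2)/12" using S2 by simp
  have X0: "X > 0" using S3 x0 by (simp add: X_def)
  have i1: "- (X^2)/3 < y" unfolding y_eq X_def using S3 x0
    by (simp add: power2_eq_square field_simps)
  have i2: "y < - (X^2)/4" unfolding y_eq X_def
  proof -
    have "(S - 3*x)^2 > 0" using S3 by simp
    thus "-(S^2 + 3*x^2)/12 < - (((x + S) / 2)^2)/4" by (simp add: power2_eq_square field_simps)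
  qed
  show "p \<in> {(x, y). - (x^2) / 3 + 2 * (d / c) * x < y \<and> y < - (x^2) / 4 + 2 * (d / c) * x \<and> x > 0}"
    using pX i1 i2 X0 by simp
qed

end
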